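(* Let $E=(\mathbb{R}^n,\|\cdot\|)$ be a normed space in which the unit vectors $e_1,\dots,e_n$ have norm one, and let $e_1^*,\dots,e_n^*$ be the coordinate functionals. Define $c_1=\max\{c\ge0:\forall A\subset\{1,\dots,n\}\ \exists x^*\in B_{E^*}:\ x^*(e_i)\ge c\ (i\in A),\ x^*(e_i)=0\ (i\notin A)\}$, $c_2=\max\{c\ge0:\sum_i b_ie_i^*\in B_{E^*}\text{ whenever }\max_i|b_i|\le c\}$, $c_3=\min\{\|\sum_{i=1}^na_ie_i\|:\sum_{i=1}^n|a_i|=1\}$. Then $c_1\ge c_2=c_3\ge\frac12c_1$.
   Context: $B_{E^*}$ is the closed unit ball of the dual space $E^*$. *)

theory Defs
  imports "HOL-Analysis.Analysis"
begin

definition is_norm :: "(real^'n \<Rightarrow> real) \<Rightarrow> bool" where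
  "is_norm N \<longleftrightarrow> (\<forall>x. N x = 0 \<longleftrightarrow> x = 0) \<and> (\<forall>c x. N (c *\<^sub>R x) = \<bar>c\<bar> * N x)
                 \<and> (\<forall>x y. N (x + y) \<le> N x + N y)"

definition dual_ball :: "(real^'n \<Rightarrow> real) \<Rightarrow> (real^'n \<Rightarrow> real) set" where
  "dual_ball N = {f. linear f \<and> (\<forall>x. \<bar>f x\<bar> \<le> N x)}"

definition coord_functional :: "('n::finite \<Rightarrow> real) \<Rightarrow> real^'n \<Rightarrow> real" where
  "coord_functional b = (\<lambda>x. \<Sum>i\<in>UNIV. b i * x $ i)"

definition c1 :: "(real^'n::finite \<Rightarrow> real) \<Rightarrow> real" where
  "c1 N = Sup {c. c \<ge> 0 \<and> (\<forall>A::'n set. \<exists>f\<in>dual_ball N.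
              (\<forall>i\<in>A. f (axis i 1) \<ge> c) \<and> (\<forall>i. i \<notin> A \<longrightarrow> f (axis i 1) = 0))}"

definition c2 :: "(real^'n::finite \<Rightarrow> real) \<Rightarrow> real" where
  "c2 N = Sup {c. c \<ge> 0 \<and> (\<forall>b::'n \<Rightarrow> real. (\<forall>i. \<bar>b i\<bar> \<le> c) \<longrightarrow> coord_functional b \<in> dual_ball N)}"

definition c3 :: "(real^'n::finite \<Rightarrow> real) \<Rightarrow> real" where
  "c3 N = Inf {N (\<Sum>i\<in>UNIV. a i *\<^sub>R axis i 1) | a::'n \<Rightarrow> real. (\<Sum>i\<in>UNIV. \<bar>a i\<bar>) = 1}"

end

theory Submission
  imports Defs
begin

lemma bexp: "(\<Sum>i\<in>UNIV. x$i *\<^sub>R axis i 1) = (x::real^'n)"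
  using basis_expansion[of x] by (simp add: scalar_mult_eq_scaleR)

lemma lin_exp: assumes "linear (f::real^'n \<Rightarrow> real)" shows "f x = (\<Sum>i\<in>UNIV. x$i * f (axis i 1))"
proof -
  have "f x = f (\<Sum>i\<in>UNIV. x$i *\<^sub>R axis i 1)" by (simp add: bexp)
  also have "\<dots> = (\<Sum>i\<in>UNIV. x$i * f (axis i 1))"
    using assms by (simp add: linear_sum linear_scale)
  finally show ?thesis .
qed

lemma comp: "(\<Sum>i\<in>UNIV. a i *\<^sub>R axis i (1::real)) $ j = a j"
  by (simp add: axis_def if_distrib cong: if_cong)

lemma cf_linear: "linear (coord_functional b)"
  unfolding coord_functional_def
  by (rule linearI) (simp_all add: sum.distrib sum_distrib_left algebra_simps)

lemma cf_axis: "coord_functional b (axis j 1) = b j"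
  unfolding coord_functional_def by (simp add: axis_def if_distrib cong: if_cong)

theorem lemma6:
  fixes N :: "real^'n::finite \<Rightarrow> real"
  assumes "is_norm N"
    and "\<forall>i. N (axis i 1) = 1"
  shows "c1 N \<ge> c2 N \<and> c2 N = c3 N \<and> c3 N \<ge> c1 N / 2"
proof -
  have Nz: "N 0 = 0" and Ns: "\<And>c x. N (c *\<^sub>R x) = \<bar>c\<bar> * N x"
    and Nt: "\<And>x y. N (x + y) \<le> N x + N y" using assms(1) unfolding is_norm_def by auto
  have N0: "N x \<ge> 0" for x
  proof -
    have "N (x + (-1) *\<^sub>R x) \<le> N x + N ((-1) *\<^sub>R x)" by (rule Nt)
    then show ?thesis using Nz Ns[of "-1" x] by simp
  qed
  define S1 where "S1 = {c. c \<ge> 0 \<and> (\<forall>A::'n set. \<exists>f\<in>dual_ball N.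
              (\<forall>i\<in>A. f (axis i 1) \<ge> c) \<and> (\<forall>i. i \<notin> A \<longrightarrow> f (axis i 1) = 0))}"
  define S2 where "S2 = {c. c \<ge> 0 \<and> (\<forall>b::'n \<Rightarrow> real. (\<forall>i. \<bar>b i\<bar> \<le> c) \<longrightarrow> coord_functional b \<in> dual_ball N)}"
  define T where "T = {N (\<Sum>i\<in>UNIV. a i *\<^sub>R axis i 1) | a::'n \<Rightarrow> real. (\<Sum>i\<in>UNIV. \<bar>a i\<bar>) = 1}"
  have c1d: "c1 N = Sup S1" unfolding c1_def S1_def ..
  have c2d: "c2 N = Sup S2" unfolding c2_def S2_def ..
  have c3d: "c3 N = Inf T" unfolding c3_def T_def ..
  have zero_db: "(\<lambda>x. 0) \<in> dual_ball N" unfolding dual_ball_def using N0 by (auto intro: linearI)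
  have "0 \<in> S1" unfolding S1_def using zero_db by auto
  then have S1ne: "S1 \<noteq> {}" by auto
  have S1b: "c \<le> 1" if "c \<in> S1" for c
  proof -
    obtain i :: 'n where True by auto
    from that obtain f where f0: "f \<in> dual_ball N" "\<forall>j\<in>UNIV. f (axis j 1) \<ge> c"
      unfolding S1_def by blast
    then have f: "f \<in> dual_ball N" "f (axis i 1) \<ge> c" by auto
    then have "\<bar>f (axis i 1)\<bar> \<le> N (axis i 1)" unfolding dual_ball_def by blast
    then have "\<bar>f (axis i 1)\<bar> \<le> 1" using assms(2) by simp
    then show ?thesis using f by linarith
  qed
  have bS1: "bdd_above S1" unfolding bdd_above_def using S1b by blast
  have "0 \<in> S2" unfolding S2_def
  proof (safe)
    fix b :: "'n \<Rightarrow> real" assume "\<forall>i. \<bar>b i\<bar> \<le> 0"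
    then have "b = (\<lambda>i. 0)" by force
    then show "coord_functional b \<in> dual_ball N"
      using zero_db unfolding coord_functional_def by simp
  qed
  then have S2ne: "S2 \<noteq> {}" by auto
  have S2S1: "S2 \<subseteq> S1"
  proof
    fix c assume c: "c \<in> S2"
    show "c \<in> S1" unfolding S1_def
    proof (safe)
      show "c \<ge> 0" using c unfolding S2_def by auto
      fix A :: "'n set"
      define b where "b = (\<lambda>i. if i \<in> A then c else 0)"
      have "coord_functional b \<in> dual_ball N"
        using c unfolding S2_def b_def by auto
      then show "\<exists>f\<in>dual_ball N. (\<forall>i\<in>A. c \<le> f (axis i 1)) \<and> (\<forall>i. i \<notin> A \<longrightarrow> f (axis i 1) = 0)"
        by (intro bexI[of _ "coord_functional b"]) (auto simp: cf_axis b_def)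
    qed
  qed
  have bS2: "bdd_above S2" unfolding bdd_above_def using S1b S2S1 by blast
  have Tne: "T \<noteq> {}"
  proof -
    obtain i :: 'n where True by auto
    have "(\<Sum>j\<in>UNIV. \<bar>(if j = i then 1 else 0::real)\<bar>) = 1"
      by (simp add: if_distrib cong: if_cong)
    then have "N (\<Sum>j\<in>UNIV. (if j = i then 1 else 0) *\<^sub>R axis j 1) \<in> T"
      unfolding T_def mem_Collect_eq
      by (intro exI[where x="\<lambda>j. if j = i then 1 else 0"] conjI refl)
    then show ?thesis by auto
  qed
  have bT: "bdd_below T" unfolding bdd_below_def T_def using N0 by blast
  have key2a: "c \<le> t" if "c \<in> S2" "t \<in> T" for c t
  proof -
    from that(2) obtain a where a: "(\<Sum>i\<in>UNIV. \<bar>a i\<bar>) = 1" "t = N (\<Sum>i\<in>UNIV. a i *\<^sub>R axis i 1)"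
      unfolding T_def by blast
    define x where "x = (\<Sum>i\<in>UNIV. a i *\<^sub>R axis i (1::real))"
    define b where "b = (\<lambda>i. c * sgn (a i))"
    have "c \<ge> 0" using that(1) unfolding S2_def by auto
    then have "\<forall>i. \<bar>b i\<bar> \<le> c" unfolding b_def by (simp add: abs_mult abs_sgn_eq)
    then have "coord_functional b \<in> dual_ball N" using that(1) unfolding S2_def by auto
    then have "\<bar>coord_functional b x\<bar> \<le> N x" unfolding dual_ball_def by auto
    moreover have "coord_functional b x = c"
    proof -
      have "coord_functional b x = (\<Sum>i\<in>UNIV. c * (sgn (a i) * a i))"
        unfolding coord_functional_def x_def comp b_def by (simp add: algebra_simps)
      also have "\<dots> = c * (\<Sum>i\<in>UNIV. \<bar>a i\<bar>)" unfolding sum_distrib_left by (rule sum.cong[OF refl]) (simp add: sgn_if)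
      finally show ?thesis using a by simp
    qed
    ultimately show ?thesis using a `c \<ge> 0` unfolding x_def by simp
  qed
  have c3ge: "\<bar>coord_functional b x\<bar> \<le> N x" if "\<forall>i. \<bar>b i\<bar> \<le> Inf T" for b x
  proof -
    define s where "s = (\<Sum>i\<in>UNIV. \<bar>x $ i\<bar>)"
    have s0: "s \<ge> 0" unfolding s_def by (simp add: sum_nonneg)
    have I0: "Inf T \<ge> 0" using Tne N0 unfolding T_def by (auto intro!: cInf_greatest)
    have "\<bar>coord_functional b x\<bar> \<le> (\<Sum>i\<in>UNIV. \<bar>b i * x $ i\<bar>)"
      unfolding coord_functional_def by (rule sum_abs)
    also have "\<dots> \<le> (\<Sum>i\<in>UNIV. Inf T * \<bar>x $ i\<bar>)"
      by (rule sum_mono) (simp add: abs_mult mult_right_mono that)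
    also have "\<dots> = Inf T * s" unfolding s_def by (simp add: sum_distrib_left)
    also have "\<dots> \<le> N x"
    proof (cases "s = 0")
      case True then show ?thesis using N0 by simp
    next
      case False
      then have sp: "s > 0" using s0 by simp
      define a where "a = (\<lambda>i. x $ i / s)"
      have "(\<Sum>i\<in>UNIV. \<bar>a i\<bar>) = 1" unfolding a_def using sp
        by (simp add: s_def sum_divide_distrib[symmetric])
      then have "N (\<Sum>i\<in>UNIV. a i *\<^sub>R axis i 1) \<in> T" unfolding T_def by blast
      then have "Inf T \<le> N (\<Sum>i\<in>UNIV. a i *\<^sub>R axis i 1)" using bT by (rule cInf_lower)
      also have "(\<Sum>i\<in>UNIV. a i *\<^sub>R axis i 1) = (1/s) *\<^sub>R x"
      proof -
        have "(\<Sum>i\<in>UNIV. a i *\<^sub>R axis i 1) = (1/s) *\<^sub>R (\<Sum>i\<in>UNIV. x$i *\<^sub>R axis i (1::real))"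
          unfolding a_def scaleR_sum_right scaleR_scaleR by simp
        then show ?thesis by (simp only: bexp)
      qed
      also have "N ((1/s) *\<^sub>R x) = N x / s" using Ns sp by simp
      finally show ?thesis using sp by (simp add: field_simps)
    qed
    finally show ?thesis .
  qed
  have c3S2: "Inf T \<in> S2" unfolding S2_def
  proof (safe)
    show "Inf T \<ge> 0" using Tne N0 unfolding T_def by (auto intro!: cInf_greatest)
    fix b :: "'n \<Rightarrow> real" assume "\<forall>i. \<bar>b i\<bar> \<le> Inf T"
    then show "coord_functional b \<in> dual_ball N" unfolding dual_ball_def
      using cf_linear c3ge by auto
  qed
  have key3: "c \<le> 2 * t" if "c \<in> S1" "t \<in> T" for c t
  proof -
    note cS = that(1)
    from that(2) obtain a where a: "(\<Sum>i\<in>UNIV. \<bar>a i\<bar>) = 1" "t = N (\<Sum>i\<in>UNIV. a i *\<^sub>R axis i 1)"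
      unfolding T_def by blast
    define x where "x = (\<Sum>i\<in>UNIV. a i *\<^sub>R axis i (1::real))"
    have xa: "x $ i = a i" for i unfolding x_def comp ..
    have c0: "c \<ge> 0" using that(1) unfolding S1_def by auto
    obtain f where f: "f \<in> dual_ball N" "\<forall>i\<in>{i. a i > 0}. f (axis i 1) \<ge> c"
       "\<forall>i. i \<notin> {i. a i > 0} \<longrightarrow> f (axis i 1) = 0"
      using cS unfolding S1_def by blast
    obtain g where g: "g \<in> dual_ball N" "\<forall>i\<in>{i. a i < 0}. g (axis i 1) \<ge> c"
       "\<forall>i. i \<notin> {i. a i < 0} \<longrightarrow> g (axis i 1) = 0"
      using cS unfolding S1_def by blast
    define P where "P = (\<Sum>i\<in>UNIV. if a i > 0 then a i else 0)"
    define M where "M = (\<Sum>i\<in>UNIV. if a i < 0 then - a i else 0)"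
    have PM: "P + M = 1" unfolding P_def M_def a(1)[symmetric] sum.distrib[symmetric]
      by (rule sum.cong) auto
    have "f x = (\<Sum>i\<in>UNIV. a i * f (axis i 1))"
      using f(1) lin_exp[of f x] xa unfolding dual_ball_def by simp
    also have "\<dots> \<ge> c * P" unfolding P_def sum_distrib_left
      by (rule sum_mono) (use f c0 in \<open>auto simp: mult_left_mono mult.commute\<close>)
    finally have fP: "c * P \<le> f x" by simp
    have "\<bar>f x\<bar> \<le> N x" using f(1) unfolding dual_ball_def by blast
    then have NP: "c * P \<le> N x" using fP by linarith
    have "g x = (\<Sum>i\<in>UNIV. a i * g (axis i 1))"
      using g(1) lin_exp[of g x] xa unfolding dual_ball_def by simp
    also have "\<dots> \<le> - (c * M)" unfolding M_def sum_distrib_left sum_negf[symmetric]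
      by (rule sum_mono) (use g c0 in \<open>auto simp: mult_left_mono_neg mult.commute\<close>)
    finally have gP: "c * M \<le> - g x" by linarith
    have "\<bar>g x\<bar> \<le> N x" using g(1) unfolding dual_ball_def by blast
    then have NM: "c * M \<le> N x" using gP by linarith
    from NP NM have "c * (P + M) \<le> 2 * N x" by (simp add: distrib_left)
    then show ?thesis using PM a unfolding x_def by simp
  qed
  have A: "c2 N \<le> c1 N" unfolding c1d c2d using S2ne bS1 S2S1 by (rule cSup_subset_mono)
  have B1: "c2 N \<le> c3 N" unfolding c2d c3d
    by (rule cSup_least[OF S2ne]) (rule cInf_greatest[OF Tne], rule key2a)
  have B2: "c3 N \<le> c2 N" unfolding c2d c3d using cSup_upper[OF c3S2 bS2] .
  have C: "c1 N \<le> 2 * c3 N" unfolding c1d c3d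
  proof (rule cSup_least[OF S1ne])
    fix c assume "c \<in> S1"
    have "c / 2 \<le> Inf T" by (rule cInf_greatest[OF Tne]) (use key3 `c \<in> S1` in force)
    then show "c \<le> 2 * Inf T" by simp
  qed
  show ?thesis using A B1 B2 C by simp
qed

end
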